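(* Let $v$ be an indeterminate and $q=v^2$. For all integers $m,n\in\mathbb{Z}$, the following identity holds in $\mathbb{Q}(v)((x))$: \[ \sigma_m^0\,\sigma_n^0=\sum_{i=0}^{\infty}\gamma_{m,n}^{i}\,\sigma_{m+n-i}^0, \qquad\text{where}\qquad \gamma_{m,n}^{i}=\{m\}_i\,\{n\}_i\,\begin{bmatrix} m+n+1\\ i\end{bmatrix}. \] (The infinite sum converges $x$-adically.)
   Context: Notation: for $n\in\mathbb{Z}$ and $i\in\mathbb{Z}_{\ge0}$, $\{n\}=v^n-v^{-n}$, $\{n\}_i=\{n\}\{n-1\}\cdots\{n-i+1\}$ (with $\{n\}_0=1$), $[n]=\frac{v^n-v^{-n}}{v-v^{-1}}$, $[i]!=[i][i-1]\cdots[1]$, and $\begin{bmatrix} n\\ i\end{bmatrix}=\frac{[n][n-1]\cdots[n-i+1]}{[i]!}$ (defined also for negative $n$). For $n\in\mathbb{Z}$ define the rational function $\sigma_n\in\mathbb{Q}(x,q)$ by $\sigma_n=\prod_{i=1}^{n}(x+x^{-1}-q^i-q^{-i})$ if $n\ge 0$ and $\sigma_n=\prod_{i=0}^{-n-1}(x+x^{-1}-q^i-q^{-i})^{-1}$ if $n<0$. Let $\sigma_n^0\in\mathbb{Z}[q^{\pm1}]((x))$ denote the Laurent expansion of $\sigma_n$ at $x=0$ (for $n<0$ this is a power series divisible by $x^{-n}$). *)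

theory Defs
  imports "HOL-Computational_Algebra.Formal_Laurent_Series"
          "HOL-Computational_Algebra.Fraction_Field"
begin

type_synonym Qv = "rat poly fract"

definition vv :: Qv where "vv = Fract [:0, 1:] 1"

definition qq :: Qv where "qq = vv ^ 2"

definition qbr :: "int \<Rightarrow> Qv" where
  "qbr n = vv powi n - vv powi (-n)"

definition qbr_fall :: "int \<Rightarrow> nat \<Rightarrow> Qv" where
  "qbr_fall n i = (\<Prod>j<i. qbr (n - int j))"

definition qint :: "int \<Rightarrow> Qv" where
  "qint n = (vv powi n - vv powi (-n)) / (vv - inverse vv)"

definition qfact :: "nat \<Rightarrow> Qv" where
  "qfact i = (\<Prod>j\<in>{1..i}. qint (int j))"

definition qbinom :: "int \<Rightarrow> nat \<Rightarrow> Qv" where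
  "qbinom n i = (\<Prod>j<i. qint (n - int j)) / qfact i"

definition sfac :: "nat \<Rightarrow> Qv fls" where
  "sfac i = fls_X + fls_X_inv - fls_const (qq ^ i + inverse (qq ^ i))"

text \<open>sigma_n^0: Laurent expansion at x = 0 of sigma_n (for n < 0 the inverse
  is taken in the field of formal Laurent series, which is exactly the expansion at 0).\<close>
definition sigma0 :: "int \<Rightarrow> Qv fls" where
  "sigma0 n = (if 0 \<le> n then (\<Prod>i\<in>{1..nat n}. sfac i)
               else inverse (\<Prod>i\<in>{0..<nat (-n)}. sfac i))"

definition gamma :: "int \<Rightarrow> int \<Rightarrow> nat \<Rightarrow> Qv" where
  "gamma m n i = qbr_fall m i * qbr_fall n i * qbinom (m + n + 1) i"

end

theory Submission imports Defs begin
unbundle fps_syntax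

lemma tendsto_flsI:
  fixes f :: "'b \<Rightarrow> 'a::field fls"
  assumes "\<And>d. eventually (\<lambda>N. \<forall>j<d. (f N - L) $$ j = 0) F"
  shows "(f \<longlongrightarrow> L) F"
  unfolding tendsto_iff
proof (intro allI impI)
  fix e :: real assume e: "e > 0"
  obtain n :: nat where n: "(1/2::real) ^ n < e" using real_arch_pow_inv[OF e] by force
  show "eventually (\<lambda>N. dist (f N) L < e) F"
    using assms[of "int n"]
  proof eventually_elim
    case (elim N)
    show ?case
    proof (cases "f N = L")
      case True then show ?thesis using e by simp
    next
      case False
      hence h: "f N - L \<noteq> 0" by simp
      have s: "int n \<le> fls_subdegree (f N - L)"
        by (rule fls_subdegree_geI[OF h]) (use elim in auto)
      have "dist (f N) L = inverse (2 ^ nat (fls_subdegree (f N - L)))"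
        using False s by (simp add: dist_fls_def)
      also have "\<dots> \<le> inverse (2 ^ n)"
        using s by (intro le_imp_inverse_le) (auto intro!: power_increasing)
      also have "\<dots> = (1/2) ^ n" by (simp add: power_one_over inverse_eq_divide)
      finally show ?thesis using n by simp
    qed
  qed
qed

lemma tendsto_flsD:
  fixes f :: "'b \<Rightarrow> 'a::field fls"
  assumes "(f \<longlongrightarrow> L) F"
  shows "eventually (\<lambda>N. \<forall>j<d. (f N - L) $$ j = 0) F"
proof -
  have "eventually (\<lambda>N. dist (f N) L < inverse (2 ^ nat d)) F"
    using assms unfolding tendsto_iff by simp
  then show ?thesis
  proof eventually_elim
    case (elim N)
    show ?case
    proof (cases "f N = L")
      case True then show ?thesis by simp
    next
      case False
      define s where "s = fls_subdegree (f N - L)"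
      have le1: "inverse (2 ^ nat d) \<le> (1::real)" using one_le_power[of "2::real" "nat d"] by (simp add: inverse_le_1_iff)
      have s0: "s \<ge> 0"
      proof (rule ccontr)
        assume "\<not> s \<ge> 0"
        hence "dist (f N) L = 2 ^ nat (-s)" using False by (simp add: dist_fls_def s_def)
        moreover have "(1::real) \<le> 2 ^ nat (-s)" by simp
        ultimately show False using elim le1 by linarith
      qed
      hence "dist (f N) L = inverse (2 ^ nat s)" using False by (simp add: dist_fls_def s_def)
      with elim have "inverse (2 ^ nat s) < (inverse (2 ^ nat d) :: real)" by simp
      hence "(2::real) ^ nat d < 2 ^ nat s" by (simp add: inverse_less_iff_less)
      hence "nat d < nat s" by simp
      hence "d \<le> s" using s0 by linarith
      thus ?thesis unfolding s_def using fls_eq0_below_subdegree[of _ "f N - L"] by (auto simp del: fls_minus_nth fls_eq0_below_subdegree)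
    qed
  qed
qed

lemma tendsto_fls_cmult:
  fixes f :: "'b \<Rightarrow> 'a::field fls"
  assumes "(f \<longlongrightarrow> L) F"
  shows "((\<lambda>N. c * f N) \<longlongrightarrow> c * L) F"
proof (cases "c = 0")
  case True then show ?thesis by simp
next
  case c: False
  show ?thesis
  proof (rule tendsto_flsI)
    fix d
    show "eventually (\<lambda>N. \<forall>j<d. (c * f N - c * L) $$ j = 0) F"
      using tendsto_flsD[OF assms, of "d - fls_subdegree c"]
    proof eventually_elim
      case (elim N)
      show ?case
      proof (cases "f N - L = 0")
        case True then show ?thesis by simp
      next
        case False
        have s: "d - fls_subdegree c \<le> fls_subdegree (f N - L)"
          by (rule fls_subdegree_geI[OF False]) (use elim in auto)
        have "fls_subdegree (c * (f N - L)) = fls_subdegree c + fls_subdegree (f N - L)"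
          using c False by simp
        hence "d \<le> fls_subdegree (c * (f N - L))" using s by simp
        thus ?thesis by (simp add: right_diff_distrib[symmetric])
      qed
    qed
  qed
qed

lemma tendsto_fls_add:
  fixes f g :: "'b \<Rightarrow> 'a::field fls"
  assumes "(f \<longlongrightarrow> L) F" "(g \<longlongrightarrow> M) F"
  shows "((\<lambda>N. f N + g N) \<longlongrightarrow> L + M) F"
proof (rule tendsto_flsI)
  fix d
  show "eventually (\<lambda>N. \<forall>j<d. (f N + g N - (L + M)) $$ j = 0) F"
    using tendsto_flsD[OF assms(1), of d] tendsto_flsD[OF assms(2), of d]
    by eventually_elim auto
qed

lemma tendsto_fls_diff:
  fixes f g :: "'b \<Rightarrow> 'a::field fls"
  assumes "(f \<longlongrightarrow> L) F" "(g \<longlongrightarrow> M) F"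
  shows "((\<lambda>N. f N - g N) \<longlongrightarrow> L - M) F"
proof (rule tendsto_flsI)
  fix d
  show "eventually (\<lambda>N. \<forall>j<d. (f N - g N - (L - M)) $$ j = 0) F"
    using tendsto_flsD[OF assms(1), of d] tendsto_flsD[OF assms(2), of d]
    by eventually_elim auto
qed


lemma Fract_pow1: "(Fract (p::rat poly) 1) ^ n = Fract (p ^ n) 1"
  by (induction n) (simp_all add: One_fract_def)

lemma vv_nz: "vv \<noteq> 0"
  by (simp add: vv_def Zero_fract_def eq_fract)

lemma vv_pow_ne1: "n > 0 \<Longrightarrow> vv ^ n \<noteq> 1"
proof
  assume n: "n > 0" and h: "vv ^ n = 1"
  have "vv ^ n = Fract ([:0,1:] ^ n) 1" by (simp add: vv_def Fract_pow1)
  also have "[:0,1:] ^ n = (monom 1 n :: rat poly)"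
    by (simp add: monom_altdef)
  finally have "Fract (monom 1 n) 1 = (1::Qv)" using h by simp
  hence "monom 1 n = (1::rat poly)" by (simp add: One_fract_def eq_fract)
  hence "degree (monom (1::rat) n) = degree (1::rat poly)" by simp
  thus False using n by (simp add: degree_monom_eq)
qed

lemma br_id:
  fixes w :: "'a::field" and A B J :: int
  assumes w: "w \<noteq> 0"
  shows "(w powi A - w powi (-A)) * (w powi B - w powi (-B)) =
         (w powi (A-J) - w powi (-(A-J))) * (w powi (B-J) - w powi (-(B-J))) +
         (w powi J - w powi (-J)) * (w powi (A+B-J) - w powi (-(A+B-J)))"
proof -
  define P where "P = w powi A"
  define Q where "Q = w powi B"
  define R where "R = w powi J"
  have nz: "P \<noteq> 0" "Q \<noteq> 0" "R \<noteq> 0" using w by (auto simp: P_def Q_def R_def)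
  have e1: "w powi (A-J) = P / R" using w by (simp add: power_int_diff P_def R_def)
  have e2: "w powi (B-J) = Q / R" using w by (simp add: power_int_diff Q_def R_def)
  have e3: "w powi (A+B-J) = P * Q / R" using w by (simp add: power_int_diff power_int_add P_def Q_def R_def)
  show ?thesis
    unfolding power_int_minus e1 e2 e3 P_def[symmetric] Q_def[symmetric] R_def[symmetric]
    using nz by (simp add: field_simps)
qed

lemma a_diff:
  fixes w :: "'a::field" and x y :: int
  assumes w: "w \<noteq> 0"
  shows "((w^2) powi x + (w^2) powi (-x)) - ((w^2) powi y + (w^2) powi (-y)) =
         (w powi (x+y) - w powi (-(x+y))) * (w powi (x-y) - w powi (-(x-y)))"
proof -
  define P where "P = w powi x"
  define Q where "Q = w powi y"
  have nz: "P \<noteq> 0" "Q \<noteq> 0" using w by (auto simp: P_def Q_def)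
  have s: "(w^2) powi z = (w powi z)^2" for z
    by (simp add: power_int_power power_int_power' mult.commute)
  have e1: "w powi (x-y) = P / Q" using w by (simp add: power_int_diff P_def Q_def)
  have e3: "w powi (x+y) = P * Q" using w by (simp add: power_int_add P_def Q_def)
  show ?thesis
    unfolding s power_int_minus e1 e3 P_def[symmetric] Q_def[symmetric] 
    using nz by (simp add: field_simps power2_eq_square)
qed

lemma qbr_nz_pos: "k > 0 \<Longrightarrow> qbr k \<noteq> 0"
proof
  assume k: "k > 0" and h: "qbr k = 0"
  define P where "P = vv ^ nat k"
  have P: "P \<noteq> 0" using vv_nz by (simp add: P_def)
  have "P = inverse P" using h k by (simp add: qbr_def power_int_minus P_def power_int_def power_inverse)
  hence "P * P = 1" using P by (metis right_inverse)
  hence "vv ^ (2 * nat k) = 1" by (simp add: P_def power_mult power2_eq_square mult.commute power_add[symmetric] mult_2)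
  thus False using vv_pow_ne1[of "2 * nat k"] k by simp
qed

lemma qbr_uminus: "qbr (-k) = - qbr k"
  by (simp add: qbr_def)

lemma qbr_nz: "k \<noteq> 0 \<Longrightarrow> qbr k \<noteq> 0"
  using qbr_nz_pos[of k] qbr_nz_pos[of "-k"] qbr_uminus[of k] by (cases "k > 0") auto

lemma qint_eq: "qint k = qbr k / qbr 1"
  by (simp add: qint_def qbr_def power_int_minus)

lemma qbr_id: "qbr A * qbr B = qbr (A-J) * qbr (B-J) + qbr J * qbr (A+B-J)"
  unfolding qbr_def using br_id[OF vv_nz] .


definition Yf :: "Qv fls" where "Yf = fls_X + fls_X_inv"
definition aa :: "int \<Rightarrow> Qv" where "aa j = qq powi j + qq powi (-j)"

lemma sfac_abs: "sfac (nat \<bar>j\<bar>) = Yf - fls_const (aa j)"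
proof -
  have "qq ^ nat \<bar>j\<bar> + inverse (qq ^ nat \<bar>j\<bar>) = aa j"
    by (cases "j \<ge> 0") (auto simp: aa_def power_int_def power_inverse)
  thus ?thesis by (simp add: sfac_def Yf_def)
qed

lemma sfac_nz: "sfac i \<noteq> 0"
  by (rule fls_nonzeroI[of _ "-1"]) (simp add: sfac_def)

lemma sfac_subdeg: "fls_subdegree (sfac i) = -1"
  by (rule fls_subdegree_eqI) (auto simp: sfac_def)

lemma sigma_rec: "sigma0 k = sfac (nat \<bar>k\<bar>) * sigma0 (k-1)"
proof (cases "k \<ge> 1")
  case True
  then obtain r where r: "nat k = Suc r" "nat (k-1) = r" by (intro that[of "nat (k-1)"]) auto
  have "nat \<bar>k\<bar> = Suc r" using True r by simp
  then show ?thesis using True r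
    by (simp add: sigma0_def prod.cl_ivl_Suc mult.commute)
next
  case False
  define r where "r = nat (-k)"
  have k1: "nat (-(k-1)) = Suc r" using False by (simp add: r_def)
  have ka: "nat \<bar>k\<bar> = r" using False by (simp add: r_def)
  have sk: "sigma0 k = inverse (\<Prod>i\<in>{0..<r}. sfac i)"
    using False by (cases "k = 0") (auto simp: sigma0_def r_def)
  have sk1: "sigma0 (k-1) = inverse (sfac r * (\<Prod>i\<in>{0..<r}. sfac i))"
    using False k1 by (simp add: sigma0_def mult.commute)
  show ?thesis unfolding sk sk1 ka using sfac_nz[of r]
    by (simp add: inverse_mult_distrib)
qed

lemma sigma_nz_subdeg: "sigma0 k \<noteq> 0 \<and> fls_subdegree (sigma0 k) = -k"
proof (induction k rule: int_induct[where k=0])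
  case base
  then show ?case by (simp add: sigma0_def)
next
  case (step1 i)
  then show ?case using sigma_rec[of "i+1"] sfac_nz sfac_subdeg by simp
next
  case (step2 i)
  have e: "sigma0 i = sfac (nat \<bar>i\<bar>) * sigma0 (i-1)" by (rule sigma_rec)
  hence nz: "sigma0 (i-1) \<noteq> 0" using step2 by auto
  have "fls_subdegree (sigma0 i) = -1 + fls_subdegree (sigma0 (i-1))"
    unfolding e using nz sfac_nz sfac_subdeg by simp
  then show ?case using nz step2 by simp
qed

lemma tendsto_err:
  fixes e :: "nat \<Rightarrow> Qv"
  shows "(\<lambda>N. fls_const (e N) * sigma0 (K - int N)) \<longlonglongrightarrow> 0"
proof (rule tendsto_flsI)
  fix d
  show "eventually (\<lambda>N. \<forall>j<d. (fls_const (e N) * sigma0 (K - int N) - 0) $$ j = 0) sequentially"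
    unfolding eventually_sequentially
  proof (intro exI allI impI)
    fix N j assume N: "N \<ge> nat (d + K)" and j: "j < d"
    have "fls_subdegree (sigma0 (K - int N)) = int N - K" using sigma_nz_subdeg by simp
    moreover have "j < int N - K" using N j by linarith
    ultimately have "sigma0 (K - int N) $$ j = 0" by simp
    thus "(fls_const (e N) * sigma0 (K - int N) - 0) $$ j = 0" by simp
  qed
qed
lemma aa_diff: "aa x - aa y = qbr (x+y) * qbr (x-y)"
  unfolding aa_def qq_def qbr_def using a_diff[OF vv_nz] .

definition dd :: "int \<Rightarrow> int \<Rightarrow> nat \<Rightarrow> Qv" where
  "dd m n i = aa (m + n + 1 - int i) - aa (n + 1)"

definition ee :: "int \<Rightarrow> int \<Rightarrow> nat \<Rightarrow> Qv" where
  "ee m n N = (case N of 0 \<Rightarrow> 0 | Suc i \<Rightarrow> gamma m n i * dd m n i)"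

lemma gamma_0: "gamma m n 0 = 1"
  by (simp add: gamma_def qbr_fall_def qbinom_def qfact_def)

lemma gamma_rec: "gamma m (n+1) N = gamma m n N + ee m n N"
proof (cases N)
  case 0
  then show ?thesis by (simp add: gamma_0 ee_def)
next
  case (Suc j)
  define Fm where "Fm = qbr_fall m j"
  define Fn where "Fn = qbr_fall n j"
  define Pr where "Pr = (\<Prod>l<j. qint (m + n + 1 - int l))"
  define Q where "Q = qfact j"
  define D where "D = qbr 1"
  have D: "D \<noteq> 0" by (simp add: D_def qbr_nz)
  have Q: "Q \<noteq> 0" unfolding Q_def qfact_def
    by (auto simp: qint_eq qbr_nz)
  have J: "qbr (int j + 1) \<noteq> 0" by (simp add: qbr_nz)
  have f1: "qbr_fall m (Suc j) = Fm * qbr (m - int j)"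
    by (simp add: Fm_def qbr_fall_def)
  have f2: "qbr_fall n (Suc j) = Fn * qbr (n - int j)"
    by (simp add: Fn_def qbr_fall_def)
  have f3: "qbr_fall (n+1) (Suc j) = qbr (n+1) * Fn"
    unfolding Fn_def qbr_fall_def prod.lessThan_Suc_shift by (simp add: algebra_simps)
  have qf: "qfact (Suc j) = Q * (qbr (int j + 1) / D)"
    by (simp add: Q_def qfact_def qint_eq D_def add.commute)
  have b1: "qbinom (m + n + 1) j = Pr / Q" by (simp add: qbinom_def Pr_def Q_def)
  have b2: "qbinom (m + n + 1) (Suc j) = Pr * (qbr (m + n + 1 - int j) / D) / (Q * (qbr (int j + 1) / D))"
    unfolding qbinom_def qf by (simp add: Pr_def qint_eq D_def)
  have b3: "qbinom (m + (n + 1) + 1) (Suc j) = (qbr (m + n + 2) / D) * Pr / (Q * (qbr (int j + 1) / D))"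
    unfolding qbinom_def qf prod.lessThan_Suc_shift
    by (simp add: Pr_def qint_eq D_def algebra_simps)
  have dj: "dd m n j = qbr (m + 2*n + 2 - int j) * qbr (m - int j)"
    unfolding dd_def aa_diff by (simp add: algebra_simps)
  have key: "qbr (n+1) * qbr (m+n+2) = qbr (n - int j) * qbr (m + n + 1 - int j) + qbr (int j + 1) * qbr (m + 2*n + 2 - int j)"
    using qbr_id[of "n+1" "m+n+2" "int j + 1"] by (simp add: algebra_simps)
  have "gamma m (n+1) N = Fm * qbr (m - int j) * Fn * Pr / Q * (qbr (n+1) * qbr (m+n+2) / qbr (int j + 1))"
    unfolding gamma_def Suc f1 f3 b3 using D J by (simp add: field_simps)
  also have "\<dots> = Fm * qbr (m - int j) * Fn * Pr / Q * (qbr (n - int j) * qbr (m + n + 1 - int j) / qbr (int j + 1)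
      + qbr (m + 2*n + 2 - int j))"
    unfolding key using J by (simp add: field_simps)
  also have "\<dots> = gamma m n N + ee m n N"
  proof -
    have ee: "ee m n (Suc j) = Fm * Fn * (Pr / Q) * (qbr (m + 2*n + 2 - int j) * qbr (m - int j))"
      unfolding ee_def by (simp add: gamma_def b1 dj Fm_def Fn_def)
    show ?thesis
      unfolding Suc ee gamma_def f1 f2 b2 using D J Q by (simp add: field_simps)
  qed
  finally show ?thesis .
qed

definition tm :: "int \<Rightarrow> int \<Rightarrow> nat \<Rightarrow> Qv fls" where
  "tm m n i = fls_const (gamma m n i) * sigma0 (m + n - int i)"

lemma partial:
  "sfac (nat \<bar>n+1\<bar>) * (\<Sum>i<N. tm m n i) =
     (\<Sum>i<N. tm m (n+1) i) + fls_const (ee m n N) * sigma0 (m + n + 1 - int N)"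
proof (induction N)
  case 0
  then show ?case by (simp add: ee_def)
next
  case (Suc N)
  have s1: "sfac (nat \<bar>n+1\<bar>) = sfac (nat \<bar>m + n + 1 - int N\<bar>) + fls_const (dd m n N)"
    unfolding sfac_abs dd_def by (simp add: fls_minus_const[symmetric])
  have s2: "sigma0 (m + n + 1 - int N) = sfac (nat \<bar>m + n + 1 - int N\<bar>) * sigma0 (m + n - int N)"
  proof -
    have i2: "m + n + 1 - int N - 1 = m + n - int N" by simp
    show ?thesis using sigma_rec[of "m + n + 1 - int N"] unfolding i2 .
  qed
  have t: "sfac (nat \<bar>n+1\<bar>) * tm m n N =
      fls_const (gamma m n N) * sigma0 (m + n + 1 - int N) + fls_const (gamma m n N * dd m n N) * sigma0 (m + n - int N)"
    unfolding s1 s2 tm_def by (simp add: algebra_simps fls_const_mult_const[symmetric] del: fls_const_mult_const)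
  have t2: "tm m (n+1) N = fls_const (gamma m n N) * sigma0 (m + n + 1 - int N) + fls_const (ee m n N) * sigma0 (m + n + 1 - int N)"
    unfolding tm_def gamma_rec by (simp add: fls_plus_const[symmetric] algebra_simps)
  have e: "ee m n (Suc N) = gamma m n N * dd m n N" by (simp add: ee_def)
  have i: "m + n + 1 - int (Suc N) = m + n - int N" by simp
  show ?case
    unfolding sum.lessThan_Suc distrib_left Suc t t2 e i by (simp add: algebra_simps)
qed

lemma base_sum: "(\<Sum>i<Suc N. tm m 0 i) = sigma0 m"
proof (induction N)
  case 0
  then show ?case by (simp add: tm_def gamma_0)
next
  case (Suc N)
  have "gamma m 0 (Suc N) = 0"
  proof -
    have "qbr 0 = 0" by (simp add: qbr_def)
    hence "qbr_fall 0 (Suc N) = 0" unfolding qbr_fall_def prod.lessThan_Suc_shift by simp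
    thus ?thesis by (simp add: gamma_def)
  qed
  then show ?case using Suc by (simp add: tm_def)
qed

lemma step_up:
  assumes "(\<lambda>N. \<Sum>i<N. tm m n i) \<longlonglongrightarrow> sigma0 m * sigma0 n"
  shows "(\<lambda>N. \<Sum>i<N. tm m (n+1) i) \<longlonglongrightarrow> sigma0 m * sigma0 (n+1)"
proof -
  have eq: "(\<lambda>N. \<Sum>i<N. tm m (n+1) i) = (\<lambda>N. sfac (nat \<bar>n+1\<bar>) * (\<Sum>i<N. tm m n i) -
      fls_const (ee m n N) * sigma0 (m + n + 1 - int N))"
    by (rule ext) (simp add: partial)
  have lim: "(\<lambda>N. sfac (nat \<bar>n+1\<bar>) * (\<Sum>i<N. tm m n i) -
      fls_const (ee m n N) * sigma0 (m + n + 1 - int N)) \<longlonglongrightarrow> sfac (nat \<bar>n+1\<bar>) * (sigma0 m * sigma0 n) - 0"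
    by (intro tendsto_fls_diff tendsto_fls_cmult assms tendsto_err)
  have r: "sigma0 (n+1) = sfac (nat \<bar>n+1\<bar>) * sigma0 n" using sigma_rec[of "n+1"] by simp
  have XY: "sfac (nat \<bar>n+1\<bar>) * (sigma0 m * sigma0 n) - 0 = sigma0 m * sigma0 (n+1)"
    unfolding r by (simp add: mult_ac)
  show ?thesis unfolding eq using lim[unfolded XY] .
qed

lemma step_down:
  assumes "(\<lambda>N. \<Sum>i<N. tm m (n+1) i) \<longlonglongrightarrow> sigma0 m * sigma0 (n+1)"
  shows "(\<lambda>N. \<Sum>i<N. tm m n i) \<longlonglongrightarrow> sigma0 m * sigma0 n"
proof -
  have nz: "sfac (nat \<bar>n+1\<bar>) \<noteq> 0" by (rule sfac_nz)
  have eq: "(\<lambda>N. \<Sum>i<N. tm m n i) = (\<lambda>N. inverse (sfac (nat \<bar>n+1\<bar>)) * ((\<Sum>i<N. tm m (n+1) i) +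
      fls_const (ee m n N) * sigma0 (m + n + 1 - int N)))"
    by (rule ext) (simp add: partial[symmetric] nz)
  have lim: "(\<lambda>N. inverse (sfac (nat \<bar>n+1\<bar>)) * ((\<Sum>i<N. tm m (n+1) i) +
      fls_const (ee m n N) * sigma0 (m + n + 1 - int N))) \<longlonglongrightarrow> inverse (sfac (nat \<bar>n+1\<bar>)) * (sigma0 m * sigma0 (n+1) + 0)"
    by (intro tendsto_fls_add tendsto_fls_cmult assms tendsto_err)
  have r: "sigma0 (n+1) = sfac (nat \<bar>n+1\<bar>) * sigma0 n" using sigma_rec[of "n+1"] by simp
  have XY: "inverse (sfac (nat \<bar>n+1\<bar>)) * (sigma0 m * sigma0 (n+1) + 0) = sigma0 m * sigma0 n"
    unfolding r using nz by (simp add: mult_ac)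
  show ?thesis unfolding eq using lim[unfolded XY] .
qed

lemma base_case: "(\<lambda>N. \<Sum>i<N. tm m 0 i) \<longlonglongrightarrow> sigma0 m * sigma0 0"
proof (rule tendsto_eventually)
  show "eventually (\<lambda>N. (\<Sum>i<N. tm m 0 i) = sigma0 m * sigma0 0) sequentially"
    unfolding eventually_sequentially
  proof (intro exI allI impI)
    fix N :: nat assume "N \<ge> 1"
    then obtain M where M: "N = Suc M" by (cases N) auto
    have s0: "sigma0 0 = 1" by (simp add: sigma0_def)
    show "(\<Sum>i<N. tm m 0 i) = sigma0 m * sigma0 0" unfolding M s0 using base_sum[where N=M] by simp
  qed
qed

theorem proposition3p3:
  fixes m n :: int
  shows "(\<lambda>i. fls_const (gamma m n i) * sigma0 (m + n - int i)) sums (sigma0 m * sigma0 n)"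
proof -
  have "(\<lambda>N. \<Sum>i<N. tm m n i) \<longlonglongrightarrow> sigma0 m * sigma0 n"
  proof (induction n rule: int_induct[where k=0])
    case base
    then show ?case by (rule base_case)
  next
    case (step1 i)
    then show ?case using step_up by blast
  next
    case (step2 i)
    then show ?case using step_down[of m "i-1"] by simp
  qed
  thus ?thesis unfolding sums_def tm_def .
qed

end
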